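(* Let $L$ be a distributive lattice with a maximum and a minimum. Then $\mathrm{FVL}\langle L\rangle$ is order dense in $\mathrm{FBL}\langle L\rangle$, i.e. for every $f\in\mathrm{FBL}\langle L\rangle$ with $f>0$ there exists $g\in\mathrm{FVL}\langle L\rangle$ with $0<g\le f$.
   Context: $L^*$ is the set of all lattice homomorphisms $x^*:L\to[-1,1]$; for $x\in L$, $\delta_x:L^*\to\mathbb R$ is $\delta_x(x^* )=x^*(x)$. A function $f:L^*\to\mathbb R$ is positively homogeneous if $f(\lambda x^* )=\lambda f(x^* )$ whenever $\lambda\ge0$ and $\lambda x^*\in L^*$; for such $f$, $\|f\|=\sup\{\sum_{i=1}^m|f(x_i^* )|: m\in\mathbb N,\ x_i^*\in L^*,\ \sup_{x\in L}\sum_{i=1}^m|x_i^*(x)|\le1\}$. $\mathrm{FVL}\langle L\rangle$ is the vector sublattice generated by $\{\delta_x:x\in L\}$ (pointwise operations), and $\mathrm{FBL}\langle L\rangle$ is its norm closure inside the Banach lattice of positively homogeneous functions with finite norm, ordered pointwise. *)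

theory Defs
  imports Complex_Main
begin

text \<open>Elements of L* are functions 'a => real; functions on L* are ('a => real) => real,
  and all conditions below only look at their values on L*.\<close>

definition lattice_dual :: "('a::lattice \<Rightarrow> real) set" where
  "lattice_dual = {xs. (\<forall>a b. xs (sup a b) = max (xs a) (xs b)) \<and>
                       (\<forall>a b. xs (inf a b) = min (xs a) (xs b)) \<and>
                       (\<forall>a. xs a \<in> {-1..1})}"

definition delta :: "'a::lattice \<Rightarrow> ('a \<Rightarrow> real) \<Rightarrow> real" where
  "delta x = (\<lambda>xs. xs x)"

definition pos_homogeneous :: "(('a::lattice \<Rightarrow> real) \<Rightarrow> real) \<Rightarrow> bool" where
  "pos_homogeneous f \<longleftrightarrow> (\<forall>c::real. \<forall>xs\<in>lattice_dual. c \<ge> 0 \<longrightarrow>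
      (\<lambda>a. c * xs a) \<in> lattice_dual \<longrightarrow> f (\<lambda>a. c * xs a) = c * f xs)"

definition fbl_norm_set :: "(('a::lattice \<Rightarrow> real) \<Rightarrow> real) \<Rightarrow> real set" where
  "fbl_norm_set f = {(\<Sum>i<m. \<bar>f (xs i)\<bar>) | m xs.
      (\<forall>i<m. (xs :: nat \<Rightarrow> 'a \<Rightarrow> real) i \<in> lattice_dual) \<and> (\<forall>x. (\<Sum>i<m. \<bar>xs i x\<bar>) \<le> 1)}"

definition fbl_norm :: "(('a::lattice \<Rightarrow> real) \<Rightarrow> real) \<Rightarrow> real" where
  "fbl_norm f = Sup (fbl_norm_set f)"

definition finite_fbl_norm :: "(('a::lattice \<Rightarrow> real) \<Rightarrow> real) \<Rightarrow> bool" where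
  "finite_fbl_norm f \<longleftrightarrow> bdd_above (fbl_norm_set f)"

inductive_set FVL :: "(('a::lattice \<Rightarrow> real) \<Rightarrow> real) set" where
  delta: "delta x \<in> FVL"
| add: "f \<in> FVL \<Longrightarrow> g \<in> FVL \<Longrightarrow> (\<lambda>xs. f xs + g xs) \<in> FVL"
| scale: "f \<in> FVL \<Longrightarrow> (\<lambda>xs. c * f xs) \<in> FVL"
| max: "f \<in> FVL \<Longrightarrow> g \<in> FVL \<Longrightarrow> (\<lambda>xs. max (f xs) (g xs)) \<in> FVL"
| min: "f \<in> FVL \<Longrightarrow> g \<in> FVL \<Longrightarrow> (\<lambda>xs. min (f xs) (g xs)) \<in> FVL"

definition FBL :: "(('a::lattice \<Rightarrow> real) \<Rightarrow> real) set" where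
  "FBL = {f. pos_homogeneous f \<and> finite_fbl_norm f \<and>
      (\<forall>e>0. \<exists>g\<in>FVL. finite_fbl_norm (\<lambda>xs. f xs - g xs) \<and>
                       fbl_norm (\<lambda>xs. f xs - g xs) < e)}"

end

theory Submission
  imports Defs
begin

lemma FVL_hom:
  assumes "g \<in> FVL" "c \<ge> 0"
  shows "g (\<lambda>a. c * xs a) = c * g xs"
  using assms(1)
proof (induction arbitrary: xs)
  case (delta x) then show ?case by (simp add: delta_def)
next
  case (add f g) then show ?case by (simp add: algebra_simps)
next
  case (scale f c') then show ?case by simp
next
  case (max f g) then show ?case using assms(2) by (simp add: max_mult_distrib_left)
next
  case (min f g) then show ?case using assms(2) by (simp add: min_mult_distrib_left)
qed

lemma dual_mono:
  assumes "x \<in> lattice_dual" "a \<le> b"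
  shows "x a \<le> x b"
proof -
  have "x b = x (sup a b)" using assms(2) by (simp add: sup_absorb2)
  also have "\<dots> = max (x a) (x b)" using assms(1) unfolding lattice_dual_def by blast
  finally show ?thesis by linarith
qed

definition NN :: "('a::bounded_lattice \<Rightarrow> real) \<Rightarrow> real" where
  "NN x = max \<bar>x top\<bar> \<bar>x bot\<bar>"

lemma NN_bound:
  assumes "x \<in> lattice_dual"
  shows "\<bar>x a\<bar> \<le> NN (x::'a::bounded_lattice \<Rightarrow> real)"
proof -
  have "x a \<le> x top" "x bot \<le> x a" using dual_mono[OF assms] by auto
  then show ?thesis unfolding NN_def by linarith
qed

lemma NN_le1:
  assumes "x \<in> lattice_dual"
  shows "NN (x::'a::bounded_lattice \<Rightarrow> real) \<le> 1"
  using assms unfolding NN_def lattice_dual_def by (auto simp: abs_le_iff)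

lemma scaled_dual:
  assumes "x \<in> lattice_dual" "NN x > 0"
  shows "(\<lambda>a. x a / NN (x::'a::bounded_lattice \<Rightarrow> real)) \<in> lattice_dual"
proof -
  let ?t = "NN x"
  have s: "\<And>a b. x (sup a b) = max (x a) (x b)" and i: "\<And>a b. x (inf a b) = min (x a) (x b)"
    using assms(1) unfolding lattice_dual_def by auto
  have b: "\<bar>x a / ?t\<bar> \<le> 1" for a
  proof -
    have "\<bar>x a\<bar> \<le> ?t" using NN_bound[OF assms(1), of a] .
    moreover have "\<bar>x a / ?t\<bar> = \<bar>x a\<bar> / ?t" using assms(2) by (simp add: abs_divide)
    ultimately show ?thesis using assms(2) by (simp add: divide_le_eq_1_pos)
  qed
  have m1: "x (sup a b) / ?t = max (x a / ?t) (x b / ?t)" for a b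
    unfolding s using assms(2) by (simp add: max_divide_distrib_right)
  have m2: "x (inf a b) / ?t = min (x a / ?t) (x b / ?t)" for a b
    unfolding i using assms(2) by (simp add: min_divide_distrib_right)
  have b2: "x a / ?t \<in> {-1..1}" for a using b[of a] unfolding atLeastAtMost_iff abs_le_iff by linarith
  show ?thesis unfolding lattice_dual_def mem_Collect_eq using m1 m2 b2 by blast
qed

lemma norm_bound:
  assumes "x \<in> lattice_dual" "finite_fbl_norm h"
  shows "\<bar>h x\<bar> \<le> fbl_norm h"
proof -
  have "\<bar>h x\<bar> \<in> fbl_norm_set h"
    unfolding fbl_norm_set_def
    apply (rule CollectI)
    apply (rule exI[of _ 1])
    apply (rule exI[of _ "\<lambda>_. x"])
    using assms(1) unfolding lattice_dual_def by (auto simp: abs_le_iff)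
  then show ?thesis unfolding fbl_norm_def using assms(2) unfolding finite_fbl_norm_def
    by (simp add: cSup_upper)
qed

theorem mainTheorem7:
  fixes f :: "('a::{distrib_lattice, bounded_lattice} \<Rightarrow> real) \<Rightarrow> real"
  assumes "f \<in> FBL"
    and "\<forall>xs\<in>lattice_dual. f xs \<ge> 0"
    and "\<exists>xs\<in>lattice_dual. f xs \<noteq> 0"
  shows "\<exists>g\<in>FVL. (\<forall>xs\<in>lattice_dual. 0 \<le> g xs \<and> g xs \<le> f xs)
                 \<and> (\<exists>xs\<in>lattice_dual. g xs \<noteq> 0)"
proof -
  obtain x0 where x0: "x0 \<in> lattice_dual" "f x0 > 0" using assms(2,3) by force
  define eps where "eps = f x0 / 4"
  have eps: "eps > 0" using x0 by (simp add: eps_def)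
  have ph: "pos_homogeneous f" using assms(1) unfolding FBL_def by simp
  have H: "\<And>c xs. xs \<in> lattice_dual \<Longrightarrow> c \<ge> 0 \<Longrightarrow> (\<lambda>a. c * xs a) \<in> lattice_dual
      \<Longrightarrow> f (\<lambda>a. c * xs a) = c * f xs"
    using ph unfolding pos_homogeneous_def by blast
  obtain g where g: "g \<in> FVL" "finite_fbl_norm (\<lambda>xs. f xs - g xs)"
      "fbl_norm (\<lambda>xs. f xs - g xs) < eps"
    using assms(1) eps unfolding FBL_def by blast
  have unif: "\<bar>f x - g x\<bar> \<le> eps" if "x \<in> lattice_dual" for x
    using norm_bound[OF that g(2)] g(3) by simp
  have hom: "\<bar>f x - g x\<bar> \<le> eps * NN x" if x: "x \<in> lattice_dual" for x
  proof (cases "NN x > 0")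
    case True
    let ?y = "\<lambda>a. x a / NN x"
    have y: "?y \<in> lattice_dual" using scaled_dual[OF x True] .
    have eq: "(\<lambda>a. NN x * ?y a) = x" using True by auto
    have "f (\<lambda>a. NN x * ?y a) = NN x * f ?y"
      using H[OF y less_imp_le[OF True]] eq x by simp
    then have "f x = NN x * f ?y" by (simp only: eq)
    moreover have "g x = NN x * g ?y" using FVL_hom[OF g(1), of "NN x" ?y] True eq by simp
    ultimately have "\<bar>f x - g x\<bar> = NN x * \<bar>f ?y - g ?y\<bar>" using True
      by (simp add: right_diff_distrib[symmetric] abs_mult)
    also have "\<dots> \<le> NN x * eps" using unif[OF y] True by (simp add: mult_left_mono)
    finally show ?thesis by (simp add: mult.commute)
  next
    case False
    have "NN x \<ge> 0" unfolding NN_def by simp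
    with False have "NN x = 0" by simp
    then have z: "\<And>a. x a = 0" using NN_bound[OF x] by (metis abs_le_zero_iff)
    have eq: "(\<lambda>a. 0 * x a) = x" using z by auto
    have "f (\<lambda>a. 0 * x a) = 0 * f x"
      using H[OF x order_refl] eq x by simp
    then have "f x = 0" by (simp only: eq)
    moreover have "g x = 0" using FVL_hom[OF g(1), of 0 x] eq by simp
    ultimately show ?thesis using \<open>NN x = 0\<close> by simp
  qed
  define e where "e = (\<lambda>xs::'a \<Rightarrow> real. max (max (delta top xs) ((-1) * delta top xs))
                                  (max (delta bot xs) ((-1) * delta bot xs)))"
  have eNN: "e xs = NN xs" for xs unfolding e_def NN_def delta_def by auto
  have eF: "e \<in> FVL" unfolding e_def by (intro FVL.intros)
  define h where "h = (\<lambda>xs. max (g xs + (- eps) * e xs) (0 * delta bot xs))"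
  have hF: "h \<in> FVL" unfolding h_def by (intro FVL.intros g(1) eF)
  have hv: "h xs = max (g xs - eps * NN xs) 0" for xs unfolding h_def eNN by simp
  show ?thesis
  proof (intro bexI[OF _ hF] conjI ballI)
    fix xs :: "'a \<Rightarrow> real" assume xs: "xs \<in> lattice_dual"
    show "0 \<le> h xs" unfolding hv by simp
    show "h xs \<le> f xs" unfolding hv using hom[OF xs] assms(2) xs by auto
  next
    have "g x0 \<ge> f x0 - eps * NN x0" using hom[OF x0(1)] by linarith
    moreover have "eps * NN x0 \<le> eps" using NN_le1[OF x0(1)] eps by simp
    ultimately have "g x0 - eps * NN x0 > 0" using eps_def x0 by linarith
    then show "\<exists>xs\<in>lattice_dual. h xs \<noteq> 0" using x0(1) hv by (intro bexI[of _ x0]) auto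
  qed
qed

end
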